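(* Let $k$ be a positive integer, $a=3k+2$, $b=2a-3$, $c=2a-1$, $S=\{a,b,c\}$, $G=\langle S\rangle$. For $i\in[0,2k+1]$ let $I_{i,k}=\{ia-3\lfloor i/2\rfloor\}\cup[ia-3\lfloor i/2\rfloor+2,\,ia]$, and let $H_{9,k}=\bigcup_{i=0}^{2k+1}I_{i,k}\cup[2ka+4,\infty[$. Then: (1) $x\in G$ if and only if $x=(s+2q)a-3q+2r$ for some $q,r,s\in\mathbb{N}$ with $0\le r\le q$; (2) $I_{i,k}<I_{i+1,k}$ for every $i\in[0,2k]$; (3) $G=H_{9,k}$; (4) $H_{9,k}$ is a $3$-permutation numerical semigroup.
   Context: $\mathbb{N}=\{0,1,2,\dots\}$. A numerical semigroup is a submonoid $G$ of $(\mathbb{N},+,0)$ with $\mathbb{N}\setminus G$ finite; $\langle S\rangle$ is the submonoid generated by $S$. Writing the elements of a numerical semigroup as $0=g_0<g_1<g_2<\cdots$, it is an $n$-permutation numerical semigroup if it is generated by $\{g_1,\dots,g_n\}$ and for every $k\in\mathbb{N}$ the tuple $(g_{kn+1}\bmod n,\dots,g_{kn+n}\bmod n)$ contains exactly one representative of each residue class mod $n$. Notation: $[u,v]=\{x\in\mathbb{N}:u\le x\le v\}$ (empty if $u>v$), $[u,\infty[=\{x\in\mathbb{N}:x\ge u\}$; for nonempty $X,Y$, $X<Y$ means $x<y$ for all $x\in X,y\in Y$. *)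

theory Defs
  imports Main "HOL-Library.Infinite_Set"
begin

inductive_set gen :: "nat set \<Rightarrow> nat set" for S :: "nat set" where
  gen_zero: "0 \<in> gen S"
| gen_base: "x \<in> S \<Longrightarrow> x \<in> gen S"
| gen_add: "x \<in> gen S \<Longrightarrow> y \<in> gen S \<Longrightarrow> x + y \<in> gen S"

definition numerical_semigroup :: "nat set \<Rightarrow> bool" where
  "numerical_semigroup G \<longleftrightarrow> 0 \<in> G \<and> (\<forall>x\<in>G. \<forall>y\<in>G. x + y \<in> G) \<and> finite (UNIV - G)"

text \<open>g_j = enumerate G j is the j-th element of G in increasing order (g_0 = 0).\<close>
definition perm_numerical_semigroup :: "nat \<Rightarrow> nat set \<Rightarrow> bool" where
  "perm_numerical_semigroup n G \<longleftrightarrow>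
     numerical_semigroup G \<and>
     G = gen ((\<lambda>j. enumerate G j) ` {1..n}) \<and>
     (\<forall>k::nat. bij_betw (\<lambda>j. enumerate G (k * n + j) mod n) {1..n} {0..<n})"

definition set_less :: "nat set \<Rightarrow> nat set \<Rightarrow> bool" where
  "set_less X Y \<longleftrightarrow> (\<forall>x\<in>X. \<forall>y\<in>Y. x < y)"

definition Iset :: "nat \<Rightarrow> nat \<Rightarrow> nat \<Rightarrow> nat set" where
  "Iset a i k = {i * a - 3 * (i div 2)} \<union> {i * a - 3 * (i div 2) + 2 .. i * a}"

definition H9 :: "nat \<Rightarrow> nat \<Rightarrow> nat set" where
  "H9 a k = (\<Union>i\<in>{0..2*k+1}. Iset a i k) \<union> {2 * k * a + 4 ..}"

end

theory Submission
  imports Defs begin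

lemma enum_next:
  fixes S :: "nat set"
  assumes "infinite S" "enumerate S n = x" "y \<in> S" "x < y" "\<And>z. x < z \<Longrightarrow> z < y \<Longrightarrow> z \<notin> S"
  shows "enumerate S (Suc n) = y"
  unfolding enumerate_Suc''[OF assms(1)] assms(2)
  by (rule Least_equality) (use assms in \<open>auto simp: not_less[symmetric]\<close>)

lemma gen_mult: "x \<in> gen S \<Longrightarrow> n * x \<in> gen S"
  by (induction n) (auto intro: gen.intros)

locale L = fixes k a :: nat assumes kpos: "k > 0" and aeq: "a = 3*k+2"
begin

definition s :: "nat \<Rightarrow> nat" where "s i = i*a - 3*(i div 2)"

lemma s_alt: "s i = (i div 2)*(6*k+1) + (i mod 2)*(3*k+2)"
proof -
  define t r where "t = i div 2" and "r = i mod 2"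
  have i: "i = 2*t + r" unfolding t_def r_def by simp
  have "i*a = t*(6*k+1) + r*(3*k+2) + 3*t" unfolding i aeq by (simp add: algebra_simps)
  then show ?thesis unfolding s_def t_def r_def by simp
qed

lemma ia: "i*a = s i + 3*(i div 2)"
proof -
  define t r where "t = i div 2" and "r = i mod 2"
  have i: "i = 2*t + r" unfolding t_def r_def by simp
  have "i*a = t*(6*k+1) + r*(3*k+2) + 3*t" unfolding i aeq by (simp add: algebra_simps)
  then show ?thesis using s_alt unfolding t_def r_def by simp
qed

lemma s_Suc: "s (Suc i) = s i + (if even i then 3*k+2 else 3*k - 1)"
proof (cases "even i")
  case True
  then have "Suc i div 2 = i div 2" "Suc i mod 2 = 1" "i mod 2 = 0" by presburger+
  then show ?thesis using True by (simp add: s_alt)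
next
  case False
  then have "Suc i div 2 = i div 2 + 1" "Suc i mod 2 = 0" "i mod 2 = 1" by presburger+
  then show ?thesis using False kpos by (simp add: s_alt algebra_simps)
qed

lemma s_strict: "strict_mono s"
  unfolding strict_mono_Suc_iff using kpos by (simp add: s_Suc)

lemma s_mono: "i \<le> j \<Longrightarrow> s i \<le> s j"
  using s_strict by (simp add: strict_mono_less_eq)

lemma gap: "i \<le> 2*k \<Longrightarrow> i*a + 2 \<le> s (Suc i)"
proof (cases "even i")
  case True
  assume "i \<le> 2*k"
  then have "i div 2 \<le> k" by simp
  then show ?thesis using True by (simp add: s_Suc ia)
next
  case False
  assume "i \<le> 2*k"
  then have "i div 2 + 1 \<le> k" using False by presburger
  then show ?thesis using False by (simp add: s_Suc ia)
qed

abbreviation G0 where "G0 \<equiv> gen {a, 2*a-3, 2*a-1}"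

lemma form_eq: "(m + 2*q)*a - 3*q + 2*r = m*a + q*(6*k+1) + 2*r"
  unfolding aeq by (simp add: algebra_simps)

lemma gen_char: "x \<in> G0 \<longleftrightarrow> (\<exists>q r m. r \<le> q \<and> x = m*a + q*(6*k+1) + 2*r)"
proof
  assume "x \<in> G0"
  then show "\<exists>q r m. r \<le> q \<and> x = m*a + q*(6*k+1) + 2*r"
  proof (induction rule: gen.induct)
    case gen_zero
    then show ?case by (rule exI[of _ 0], rule exI[of _ 0], rule exI[of _ 0]) simp
  next
    case (gen_base x)
    then consider "x = a" | "x = 2*a-3" | "x = 2*a-1" by auto
    then show ?case
    proof cases
      case 1 then show ?thesis by (intro exI[of _ 0] exI[of _ 1]) simp
    next
      case 2 then show ?thesis using aeq by (intro exI[of _ 1] exI[of _ 0] exI[of _ 0]) simp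
    next
      case 3 then show ?thesis using aeq by (intro exI[of _ 1] exI[of _ 1] exI[of _ 0]) simp
    qed
  next
    case (gen_add x y)
    then obtain q1 r1 m1 q2 r2 m2 where "r1 \<le> q1" "x = m1*a + q1*(6*k+1) + 2*r1"
      "r2 \<le> q2" "y = m2*a + q2*(6*k+1) + 2*r2" by blast
    then show ?case
      by (intro exI[of _ "q1+q2"] exI[of _ "r1+r2"] exI[of _ "m1+m2"]) (simp add: algebra_simps)
  qed
next
  assume "\<exists>q r m. r \<le> q \<and> x = m*a + q*(6*k+1) + 2*r"
  then obtain q r m where qr: "r \<le> q" "x = m*a + q*(6*k+1) + 2*r" by blast
  have ha: "a \<in> G0" and hb: "6*k+1 \<in> G0" and hc: "6*k+3 \<in> G0"
    using aeq by (auto intro: gen.intros)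
  obtain d where d: "q = r + d" using qr(1) le_Suc_ex by blast
  have "x = m*a + (q-r)*(6*k+1) + r*(6*k+3)"
    using qr unfolding d by (simp add: algebra_simps)
  then show "x \<in> G0"
    using gen_mult[OF ha] gen_mult[OF hb] gen_mult[OF hc] by (metis gen_add)
qed

lemma Iset_eq: "Iset a i k = {s i} \<union> {s i + 2 .. i*a}"
  unfolding Iset_def s_def by simp

lemma H9_iff: "x \<in> H9 a k \<longleftrightarrow> (\<exists>i\<le>2*k+1. x = s i \<or> (s i + 2 \<le> x \<and> x \<le> i*a)) \<or> 2*k*a+4 \<le> x"
  unfolding H9_def Iset_eq atLeastAtMost_iff Un_iff UN_iff singleton_iff atLeast_iff Bex_def
  by (metis le0)

lemma ia_split: "q \<le> i div 2 \<Longrightarrow> i*a = (i - 2*q)*a + q*(6*k+1) + 3*q"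
proof -
  assume "q \<le> i div 2"
  then have "i = (i - 2*q) + 2*q" by simp
  then have 1: "i*a = (i - 2*q)*a + 2*q*a" by (metis add_mult_distrib)
  have 2: "2*q*a = q*(6*k+1) + 3*q" unfolding aeq by (simp add: algebra_simps)
  show ?thesis using 1 2 by linarith
qed

lemma jsplit: "(j::nat) + 2 \<le> 3*t \<Longrightarrow> \<exists>q r. r \<le> q \<and> q \<le> t \<and> 3*q = j + 2*r"
proof -
  assume h: "j + 2 \<le> 3*t"
  consider "j mod 3 = 0" | "j mod 3 = 1" | "j mod 3 = 2" by linarith
  then show ?thesis
  proof cases
    case 1 then have "j div 3 \<le> t \<and> 3*(j div 3) = j + 2*0" using h by presburger
    then show ?thesis by blast
  next
    case 2 then have "j div 3 + 1 \<le> t \<and> 3*(j div 3 + 1) = j + 2*1" using h by presburger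
    then show ?thesis by (intro exI[of _ "j div 3 + 1"] exI[of _ 1]) simp
  next
    case 3 then have "j div 3 + 2 \<le> t \<and> 3*(j div 3 + 2) = j + 2*2" using h by presburger
    then show ?thesis by (intro exI[of _ "j div 3 + 2"] exI[of _ 2]) simp
  qed
qed

lemma Iset_sub: assumes "x = s i \<or> (s i + 2 \<le> x \<and> x \<le> i*a)" shows "x \<in> G0"
proof -
  define t where "t = i div 2"
  have iat: "i*a = s i + 3*t" using ia t_def by simp
  have "\<exists>q r. r \<le> q \<and> q \<le> t \<and> x + 3*q = i*a + 2*r"
  proof (cases "x = s i")
    case True then show ?thesis using iat by (intro exI[of _ t] exI[of _ 0]) simp
  next
    case False
    then have x: "s i + 2 \<le> x" "x \<le> i*a" using assms by auto
    define j where "j = i*a - x"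
    have j: "j + 2 \<le> 3*t" "x + j = i*a" using x iat unfolding j_def by linarith+
    obtain q r where "r \<le> q" "q \<le> t" "3*q = j + 2*r" using jsplit[OF j(1)] by blast
    then show ?thesis using j(2) by (intro exI[of _ q] exI[of _ r]) linarith
  qed
  then obtain q r where qr: "r \<le> q" "q \<le> t" "x + 3*q = i*a + 2*r" by blast
  have "x = (i - 2*q)*a + q*(6*k+1) + 2*r"
    using qr ia_split[of q i] t_def by linarith
  then show ?thesis using qr gen_char by blast
qed

lemma s2k1: "s (2*k+1) = 2*k*a + 2"
proof -
  have "(2*k+1) div 2 = k" "(2*k+1) mod 2 = 1" by simp_all
  then show ?thesis unfolding s_alt using aeq by (simp add: algebra_simps)
qed
lemma s2k2: "s (2*k+2) = 2*k*a + 3*k + 1"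
proof -
  have "(2*k+2) div 2 = k+1" "(2*k+2) mod 2 = 0" by simp_all
  then show ?thesis unfolding s_alt using aeq by (simp add: algebra_simps)
qed
lemma m2k1: "(2*k+1)*a = 2*k*a + a" by (simp add: algebra_simps)
lemma m2k2: "(2*k+2)*a = 2*k*a + 2*a" by (simp add: algebra_simps)

lemma tail_sub: "2*k*a+4 \<le> y \<Longrightarrow> y \<in> G0"
proof (induction y rule: less_induct)
  case (less y)
  show ?case
  proof (cases "y \<le> (2*k+2)*a")
    case True
    show ?thesis
    proof (cases "y \<le> (2*k+1)*a")
      case True
      then show ?thesis using less.prems s2k1 by (intro Iset_sub[of _ "2*k+1"]) auto
    next
      case False
      then show ?thesis using \<open>y \<le> (2*k+2)*a\<close> s2k2 aeq m2k1 by (intro Iset_sub[of _ "2*k+2"]) linarith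
    qed
  next
    case False
    have "2*k*a+4 \<le> y - a" using False aeq m2k2 kpos by linarith
    moreover have "y - a < y" using False aeq m2k2 kpos by linarith
    ultimately have "2*k*a+4 \<le> y - a" "y - a < y" by blast+
    then have "y - a \<in> G0" using less.IH by blast
    moreover have "a \<in> G0" by (auto intro: gen.intros)
    moreover have "y = (y - a) + a" using \<open>2*k*a+4 \<le> y - a\<close> by linarith
    ultimately show ?thesis by (metis gen_add)
  qed
qed

lemma G0_H9: "G0 = H9 a k"
proof (intro set_eqI iffI)
  fix x assume "x \<in> G0"
  then obtain q r m where qr: "r \<le> q" "x = m*a + q*(6*k+1) + 2*r" using gen_char by blast
  define i where "i = m + 2*q"
  define t where "t = i div 2"
  have qt: "q \<le> t" unfolding t_def i_def by simp
  have iat: "i*a = s i + 3*t" using ia t_def by simp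
  have x3: "x + 3*q = i*a + 2*r" using ia_split[of q i] qt qr unfolding t_def i_def by simp
  show "x \<in> H9 a k"
  proof (cases "i \<le> 2*k+1")
    case True
    have "x = s i \<or> (s i + 2 \<le> x \<and> x \<le> i*a)"
    proof (cases "q < t")
      case True then show ?thesis using x3 iat qr by auto
    next
      case False then show ?thesis using x3 iat qr qt by (cases "r = 0") auto
    qed
    then show ?thesis using True H9_iff by blast
  next
    case False
    then have "s (2*k+2) \<le> s i" by (intro s_mono) simp
    then have "2*k*a + 4 \<le> x" using s2k2 x3 iat qt kpos by linarith
    then show ?thesis using H9_iff by blast
  qed
next
  fix x assume "x \<in> H9 a k"
  then show "x \<in> G0" unfolding H9_iff using Iset_sub tail_sub by blast
qed

lemma set_less_part: "i \<le> 2*k \<Longrightarrow> set_less (Iset a i k) (Iset a (i + 1) k)"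
proof -
  assume i: "i \<le> 2*k"
  have "s i \<le> i*a" using ia[of i] by simp
  moreover have "i*a + 2 \<le> s (Suc i)" using gap[OF i] .
  ultimately show ?thesis unfolding set_less_def Iset_eq by auto
qed

abbreviation H where "H \<equiv> H9 a k"

lemma H_inf: "infinite H"
proof -
  have "{2*k*a+4..} \<subseteq> H" using H9_iff by auto
  then show ?thesis using infinite_Ici infinite_super by blast
qed

lemma mult_mono_a: "j \<le> i \<Longrightarrow> j*a \<le> i*a" by simp

lemma gap_out: assumes i: "i \<le> 2*k" and y: "i*a < y" "y < s (Suc i)" shows "y \<notin> H"
proof
  assume "y \<in> H"
  have "s (Suc i) \<le> s (2*k+1)" using i by (intro s_mono) simp
  then have "y < 2*k*a+4" using y s2k1 by linarith
  then obtain j where j: "j \<le> 2*k+1" "y = s j \<or> (s j + 2 \<le> y \<and> y \<le> j*a)"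
    using \<open>y \<in> H\<close> H9_iff by auto
  show False
  proof (cases "j \<le> i")
    case True
    then have "j*a \<le> i*a" by simp
    moreover have "s j \<le> j*a" using ia[of j] by simp
    ultimately show False using j y by linarith
  next
    case False
    then have "s (Suc i) \<le> s j" by (intro s_mono) simp
    then show False using j y by linarith
  qed
qed

lemma s_out: assumes i: "2 \<le> i" "i \<le> 2*k+1" shows "s i + 1 \<notin> H"
proof
  assume "s i + 1 \<in> H"
  have "s i \<le> s (2*k+1)" using i by (intro s_mono) simp
  then have "s i + 1 < 2*k*a+4" using s2k1 by linarith
  then obtain j where j: "j \<le> 2*k+1" "s i + 1 = s j \<or> (s j + 2 \<le> s i + 1 \<and> s i + 1 \<le> j*a)"
    using \<open>s i + 1 \<in> H\<close> H9_iff by auto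
  have iat: "i*a = s i + 3*(i div 2)" using ia .
  have "1 \<le> i div 2" using i by simp
  show False
  proof (cases "j < i")
    case True
    then have "j \<le> i - 1" by simp
    then have "j*a \<le> (i-1)*a" by (rule mult_le_mono1)
    moreover have "(i-1)*a + 2 \<le> s i"
    proof -
      have "(i-1)*a + 2 \<le> s (Suc (i-1))" using i by (intro gap) simp
      moreover have "Suc (i-1) = i" using i by simp
      ultimately show ?thesis by simp
    qed
    moreover have "s j \<le> j*a" using ia[of j] by simp
    ultimately have "j*a + 2 \<le> s i" "s j \<le> j*a" by linarith+
    then show False using j by linarith
  next
    case False
    show False
    proof (cases "j = i")
      case True then show False using j by simp
    next
      case False
      then have ji: "Suc i \<le> j" using \<open>\<not> j < i\<close> by simp
      then have "i \<le> 2*k" using j by simp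
      then have "i*a + 2 \<le> s (Suc i)" by (rule gap)
      moreover have "s (Suc i) \<le> s j" using ji by (rule s_mono)
      ultimately show False using j iat \<open>1 \<le> i div 2\<close> by linarith
    qed
  qed
qed

lemma enum0: "enumerate H 0 = 0"
proof -
  have "0 \<in> H" using G0_H9 gen.gen_zero by blast
  then show ?thesis unfolding enumerate_0 by (simp add: Least_eq_0)
qed

definition Tp :: "nat \<Rightarrow> bool" where
  "Tp x \<longleftrightarrow> (\<exists>i. 1 \<le> i \<and> i \<le> 2*k \<and> (x = i*a \<or> (s i + 2 \<le> x \<and> x \<le> i*a \<and> x mod 3 = (i*a) mod 3)))
     \<or> (2*k*a+4 \<le> x \<and> x mod 3 = (2*k*a+2) mod 3)"

lemma in_H: "i \<le> 2*k+1 \<Longrightarrow> s i + 2 \<le> y \<Longrightarrow> y \<le> i*a \<Longrightarrow> y \<in> H"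
  using H9_iff by blast

lemma res_cons: "(x::nat) mod 3 \<noteq> (x+1) mod 3 \<and> x mod 3 \<noteq> (x+2) mod 3 \<and> (x+1) mod 3 \<noteq> (x+2) mod 3"
proof -
  have "x mod 3 = 0 \<or> x mod 3 = 1 \<or> x mod 3 = 2" by linarith
  then show ?thesis by (auto simp: mod_Suc)
qed
lemma res3: assumes "(sg::nat) + 3*t = x + 3*k + 2" shows "x mod 3 \<noteq> sg mod 3 \<and> x mod 3 \<noteq> (sg+2) mod 3 \<and> sg mod 3 \<noteq> (sg+2) mod 3"
proof -
  have "(sg + 3*t) mod 3 = (x + 2 + 3*k) mod 3" using assms by (simp add: add.commute add.left_commute)
  then have "sg mod 3 = (x+2) mod 3" by (simp only: mod_mult_self2)
  moreover have "x mod 3 = 0 \<or> x mod 3 = 1 \<or> x mod 3 = 2" by linarith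
  ultimately show ?thesis by (auto simp: mod_Suc)
qed

lemma le3: assumes "(x::nat) \<le> y" "x mod 3 = y mod 3" "x \<noteq> y" shows "x + 3 \<le> y"
proof -
  have "3 dvd (y - x)" using assms mod_eq_dvd_iff_nat by metis
  moreover have "y - x \<noteq> 0" using assms by simp
  ultimately have "3 \<le> y - x" by (simp add: dvd_imp_le)
  then show ?thesis by simp
qed

lemma stepA: assumes i: "1 \<le> i" "i \<le> 2*k" and e: "enumerate H n = i*a"
  shows "enumerate H (Suc n) = s (Suc i) \<and> enumerate H (Suc (Suc n)) = s (Suc i) + 2
     \<and> enumerate H (Suc (Suc (Suc n))) = s (Suc i) + 3"
proof -
  let ?g = "s (Suc i)"
  have g1: "i*a + 2 \<le> ?g" using gap i by simp
  have sia: "Suc i * a = ?g + 3*(Suc i div 2)" using ia .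
  have "1 \<le> Suc i div 2" using i by simp
  then have g3: "?g + 3 \<le> Suc i * a" using sia by linarith
  have si: "Suc i \<le> 2*k+1" using i by simp
  have m1: "?g \<in> H" using H9_iff si by blast
  have m2: "?g + 2 \<in> H" using in_H[OF si] g3 by simp
  have m3: "?g + 3 \<in> H" using in_H[OF si] g3 by simp
  have e1: "enumerate H (Suc n) = ?g"
    by (rule enum_next[OF H_inf e m1]) (use g1 gap_out i in auto)
  have e2: "enumerate H (Suc (Suc n)) = ?g + 2"
  proof (rule enum_next[OF H_inf e1 m2])
    fix z assume "?g < z" "z < ?g + 2"
    then have "z = ?g + 1" by simp
    then show "z \<notin> H" using s_out[of "Suc i"] i by simp
  qed simp
  have e3: "enumerate H (Suc (Suc (Suc n))) = ?g + 3"
    by (rule enum_next[OF H_inf e2 m3]) auto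
  show ?thesis using e1 e2 e3 by simp
qed

lemma Tp_A: assumes i: "1 \<le> i" "i \<le> 2*k" shows "Tp (s (Suc i) + 3)"
proof -
  let ?g = "s (Suc i)"
  have sia: "Suc i * a = ?g + 3*(Suc i div 2)" using ia .
  have "1 \<le> Suc i div 2" using i by simp
  then have g3: "?g + 3 \<le> Suc i * a" using sia by linarith
  show ?thesis
  proof (cases "Suc i \<le> 2*k")
    case True
    have "(?g + 3) mod 3 = (Suc i * a) mod 3" unfolding sia by simp
    then show ?thesis unfolding Tp_def using True g3 by (intro disjI1 exI[of _ "Suc i"]) simp
  next
    case False
    then have "Suc i = 2*k+1" using i by simp
    then have "?g = 2*k*a+2" using s2k1 by simp
    moreover have "(2*k*a+2+3) mod 3 = (2*k*a+2) mod 3" by (simp only: mod_add_self2)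
    ultimately show ?thesis unfolding Tp_def by (intro disjI2) simp
  qed
qed

lemma nsuc: "n+1 = Suc n" "n+2 = Suc(Suc n)" "n+3 = Suc(Suc(Suc n))" by simp_all

lemma step: assumes T: "Tp x" and e: "enumerate H n = x"
  shows "Tp (enumerate H (n+3)) \<and> x mod 3 \<noteq> enumerate H (n+1) mod 3
    \<and> x mod 3 \<noteq> enumerate H (n+2) mod 3 \<and> enumerate H (n+1) mod 3 \<noteq> enumerate H (n+2) mod 3"
proof -
  have cons: "enumerate H (n+1) = x+1 \<and> enumerate H (n+2) = x+2 \<and> enumerate H (n+3) = x+3"
    if h: "x+1 \<in> H" "x+2 \<in> H" "x+3 \<in> H"
  proof -
    have c1: "enumerate H (Suc n) = x+1" by (rule enum_next[OF H_inf e h(1)]) auto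
    have c2: "enumerate H (Suc (Suc n)) = x+2" by (rule enum_next[OF H_inf c1 h(2)]) auto
    have c3: "enumerate H (Suc (Suc (Suc n))) = x+3" by (rule enum_next[OF H_inf c2 h(3)]) auto
    show ?thesis unfolding nsuc using c1 c2 c3 by simp
  qed
  from T consider (A) i where "1 \<le> i" "i \<le> 2*k" "x = i*a"
    | (B) i where "1 \<le> i" "i \<le> 2*k" "s i + 2 \<le> x" "x \<le> i*a" "x mod 3 = (i*a) mod 3" "x \<noteq> i*a"
    | (C) "2*k*a+4 \<le> x" "x mod 3 = (2*k*a+2) mod 3"
    unfolding Tp_def by blast
  then show ?thesis
  proof cases
    case (A i)
    have E: "enumerate H (n+1) = s (Suc i) \<and> enumerate H (n+2) = s (Suc i) + 2
     \<and> enumerate H (n+3) = s (Suc i) + 3" unfolding nsuc using stepA[OF A(1,2)] e A(3) by simp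
    have "Suc i * a = x + 3*k + 2" using A(3) aeq by simp
    then have "s (Suc i) + 3*(Suc i div 2) = x + 3*k+2" using ia[of "Suc i"] by simp
    then show ?thesis using E res3 Tp_A[OF A(1,2)] by metis
  next
    case (B i)
    have "x + 3 \<le> i*a" using B(4,5,6) by (rule le3)
    moreover have "i \<le> 2*k+1" using B by simp
    ultimately have "x+1 \<in> H" "x+2 \<in> H" "x+3 \<in> H" using in_H B(3) by auto
    then have E: "enumerate H (n+1) = x+1 \<and> enumerate H (n+2) = x+2 \<and> enumerate H (n+3) = x+3"
      by (rule cons)
    have "(x+3) mod 3 = (i*a) mod 3" using B(5) by (simp only: mod_add_self2)
    then have "Tp (x+3)" unfolding Tp_def using B \<open>x + 3 \<le> i*a\<close> by (intro disjI1 exI[of _ i]) simp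
    then show ?thesis using E res_cons by simp
  next
    case C
    have "x+1 \<in> H" "x+2 \<in> H" "x+3 \<in> H" using C H9_iff by auto
    then have E: "enumerate H (n+1) = x+1 \<and> enumerate H (n+2) = x+2 \<and> enumerate H (n+3) = x+3"
      by (rule cons)
    have "(x+3) mod 3 = x mod 3" by (simp only: mod_add_self2)
    then have "Tp (x+3)" unfolding Tp_def using C by (intro disjI2) simp
    then show ?thesis using E res_cons by simp
  qed
qed

lemma enum1: "enumerate H 1 = a"
proof -
  have s1: "s 1 = a" unfolding s_def by simp
  have "a \<in> H" using G0_H9 gen.gen_base by blast
  then show ?thesis
    using enum_next[OF H_inf enum0 \<open>a \<in> H\<close>] gap_out[of 0] s1 aeq by simp
qed

lemma enum23: "enumerate H 2 = 2*a-3 \<and> enumerate H 3 = 2*a-1"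
proof -
  have "s 2 = 2*a-3" unfolding s_def by simp
  moreover have "2*a - 3 + 2 = 2*a-1" using aeq by simp
  ultimately show ?thesis using stepA[of 1 1] enum1 kpos by (simp add: numeral_eq_Suc)
qed

lemma groups: "Tp (enumerate H (3*m+1)) \<and> enumerate H (3*m+1) mod 3 \<noteq> enumerate H (3*m+2) mod 3
    \<and> enumerate H (3*m+1) mod 3 \<noteq> enumerate H (3*m+3) mod 3 \<and> enumerate H (3*m+2) mod 3 \<noteq> enumerate H (3*m+3) mod 3"
proof (induction m)
  case 0
  have "Tp a" unfolding Tp_def using kpos by (intro disjI1 exI[of _ 1]) simp
  have S: "Tp (enumerate H (1+3)) \<and> a mod 3 \<noteq> enumerate H (1+1) mod 3
    \<and> a mod 3 \<noteq> enumerate H (1+2) mod 3 \<and> enumerate H (1+1) mod 3 \<noteq> enumerate H (1+2) mod 3"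
    using step[OF \<open>Tp a\<close> enum1] .
  have n: "(1::nat)+1 = 2" "(1::nat)+2 = 3" "3*0+1 = (1::nat)" "3*0+2=(2::nat)" "3*0+3 = (3::nat)" by simp_all
  show ?case using S \<open>Tp a\<close> unfolding n enum1 by blast
next
  case (Suc m)
  then have "Tp (enumerate H (3*Suc m+1))" using step[OF _ refl, of "3*m+1"] by (simp add: algebra_simps)
  then show ?case using step[OF _ refl, of "3*Suc m+1"] by (simp add: algebra_simps)
qed

lemma bij3: fixes f :: "nat \<Rightarrow> nat"
  assumes "f 1 \<noteq> f 2" "f 1 \<noteq> f 3" "f 2 \<noteq> f 3" "f 1 < 3" "f 2 < 3" "f 3 < 3"
  shows "bij_betw f {1..3} {0..<3}"
proof -
  have a: "{1..3::nat} = {1,2,3}" "{0..<3::nat} = {0,1,2}" by auto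
  have "inj_on f {1,2,3}" using assms by auto
  moreover have "f ` {1,2,3} = {0,1,2}"
  proof
    show "f ` {1,2,3} \<subseteq> {0,1,2}" using assms by auto
    show "{0,1,2} \<subseteq> f ` {1,2,3}"
    proof
      fix v :: nat assume "v \<in> {0,1,2}"
      then have "v = f 1 \<or> v = f 2 \<or> v = f 3" using assms by auto
      then show "v \<in> f ` {1,2,3}" by auto
    qed
  qed
  ultimately show ?thesis unfolding a bij_betw_def by simp
qed

lemma perm: "perm_numerical_semigroup 3 H"
proof -
  have ns: "numerical_semigroup H"
    unfolding numerical_semigroup_def
  proof (intro conjI)
    show "0 \<in> H" using G0_H9 gen.gen_zero by blast
    show "\<forall>x\<in>H. \<forall>y\<in>H. x + y \<in> H" using G0_H9 gen.gen_add by blast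
    have "UNIV - H \<subseteq> {..<2*k*a+4}" using H9_iff by auto
    then show "finite (UNIV - H)" using finite_subset by blast
  qed
  have img: "(\<lambda>j. enumerate H j) ` {1..3} = {a, 2*a-3, 2*a-1}"
  proof -
    have "{1..3::nat} = {1,2,3}" by auto
    then show ?thesis using enum1 enum23 by simp
  qed
  have bj: "bij_betw (\<lambda>j. enumerate H (m * 3 + j) mod 3) {1..3} {0..<3}" for m
    using groups[of m] by (intro bij3) (simp_all add: mult.commute)
  show ?thesis unfolding perm_numerical_semigroup_def using ns img G0_H9 bj by simp
qed

end

theorem lemma4p9:
  fixes k a b c :: nat and G :: "nat set"
  assumes "k > 0" and "a = 3 * k + 2" and "b = 2 * a - 3" and "c = 2 * a - 1"
    and "G = gen {a, b, c}"
  shows "(\<forall>x. x \<in> G \<longleftrightarrow> (\<exists>q r s. r \<le> q \<and> x = (s + 2 * q) * a - 3 * q + 2 * r))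
    \<and> (\<forall>i\<in>{0..2*k}. set_less (Iset a i k) (Iset a (i + 1) k))
    \<and> G = H9 a k
    \<and> perm_numerical_semigroup 3 (H9 a k)"
proof -
  interpret L k a using assms(1,2) by unfold_locales
  have GG: "G = gen {a, 2*a-3, 2*a-1}" using assms(3-5) by simp
  have p1: "\<forall>x. x \<in> G \<longleftrightarrow> (\<exists>q r s. r \<le> q \<and> x = (s + 2 * q) * a - 3 * q + 2 * r)"
    unfolding GG gen_char form_eq by blast
  have p2: "\<forall>i\<in>{0..2*k}. set_less (Iset a i k) (Iset a (i + 1) k)"
    using set_less_part by simp
  show ?thesis using p1 p2 GG G0_H9 perm by blast
qed

end
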